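(* Let $d\geq 2$, let $\rho^s$ be a state on $H_d=\mathbb{C}^d$, and let $A$ and $B$ be auxiliary qudits ($d$-dimensional systems) each prepared in $|0\rangle\langle 0|$. Then there exists an incoherent operation $\Lambda$ on $H_d\otimes H_d\otimes H_d$ such that $\Lambda(\rho^s\otimes|0\rangle\langle 0|^A\otimes|0\rangle\langle 0|^B)$ is genuinely tripartite entangled if and only if $\rho^s$ is coherent.
   Context: Coherence is with respect to the computational basis of $H_d$ and the product computational basis of $H_d^{\otimes 3}$; a state is incoherent if it is diagonal in this basis and coherent otherwise. An incoherent operation is a completely positive trace-preserving map $\Lambda(\rho)=\sum_j K_j\rho K_j^\dagger$ whose Kraus operators map incoherent states to (unnormalized) incoherent states. A pure tripartite state is biseparable if it is a product state with respect to some bipartition of the three parties into two nonempty groups; a tripartite mixed state is genuinely tripartite entangled if it cannot be written as a convex combination of biseparable pure states (possibly with respect to different bipartitions). *)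

theory Defs
  imports "Jordan_Normal_Form.Schur_Decomposition"
begin

text \<open>The computational basis of C^n is the standard basis; H_d^{(x)3} is C^(d^3)
  with product basis index |i,j,k> = (i*d + j)*d + k (Kronecker convention).\<close>

definition density :: "nat \<Rightarrow> complex mat \<Rightarrow> bool" where
  "density n \<rho> \<longleftrightarrow> \<rho> \<in> carrier_mat n n \<and> mat_adjoint \<rho> = \<rho> \<and> (\<Sum>i<n. \<rho> $$ (i, i)) = 1 \<and>
     (\<forall>v \<in> carrier_vec n. 0 \<le> Re (\<Sum>i<n. \<Sum>j<n. cnj (v $ i) * \<rho> $$ (i, j) * v $ j))"

definition is_diag :: "nat \<Rightarrow> complex mat \<Rightarrow> bool" where
  "is_diag n M \<longleftrightarrow> (\<forall>i<n. \<forall>j<n. i \<noteq> j \<longrightarrow> M $$ (i, j) = 0)"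

definition incoherent_state :: "nat \<Rightarrow> complex mat \<Rightarrow> bool" where
  "incoherent_state n \<rho> \<longleftrightarrow> density n \<rho> \<and> is_diag n \<rho>"

definition coherent_state :: "nat \<Rightarrow> complex mat \<Rightarrow> bool" where
  "coherent_state n \<rho> \<longleftrightarrow> density n \<rho> \<and> \<not> is_diag n \<rho>"

definition kraus_channel :: "nat \<Rightarrow> complex mat list \<Rightarrow> bool" where
  "kraus_channel n Ks \<longleftrightarrow> set Ks \<subseteq> carrier_mat n n \<and>
     foldr (\<lambda>K acc. mat_adjoint K * K + acc) Ks (0\<^sub>m n n) = 1\<^sub>m n"

definition apply_kraus :: "nat \<Rightarrow> complex mat list \<Rightarrow> complex mat \<Rightarrow> complex mat" where
  "apply_kraus n Ks \<rho> = foldr (\<lambda>K acc. K * \<rho> * mat_adjoint K + acc) Ks (0\<^sub>m n n)"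

definition incoherent_operation :: "nat \<Rightarrow> complex mat list \<Rightarrow> bool" where
  "incoherent_operation n Ks \<longleftrightarrow> kraus_channel n Ks \<and>
     (\<forall>K \<in> set Ks. \<forall>\<sigma>. incoherent_state n \<sigma> \<longrightarrow> is_diag n (K * \<sigma> * mat_adjoint K))"

definition kron :: "complex mat \<Rightarrow> complex mat \<Rightarrow> complex mat" where
  "kron A B = mat (dim_row A * dim_row B) (dim_col A * dim_col B)
     (\<lambda>(r, c). A $$ (r div dim_row B, c div dim_col B) * B $$ (r mod dim_row B, c mod dim_col B))"

definition ket0_proj :: "nat \<Rightarrow> complex mat" where
  "ket0_proj d = mat d d (\<lambda>(i, j). if i = 0 \<and> j = 0 then 1 else 0)"

definition unit_vec_c :: "nat \<Rightarrow> complex vec \<Rightarrow> bool" where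
  "unit_vec_c n \<psi> \<longleftrightarrow> \<psi> \<in> carrier_vec n \<and> (\<Sum>i<n. (cmod (\<psi> $ i))\<^sup>2) = 1"

definition biseparable_pure :: "nat \<Rightarrow> complex vec \<Rightarrow> bool" where
  "biseparable_pure d \<psi> \<longleftrightarrow>
     (\<exists>a b. \<forall>i<d. \<forall>j<d. \<forall>k<d. \<psi> $ ((i * d + j) * d + k) = a i * b j k) \<or>
     (\<exists>a b. \<forall>i<d. \<forall>j<d. \<forall>k<d. \<psi> $ ((i * d + j) * d + k) = a j * b i k) \<or>
     (\<exists>a b. \<forall>i<d. \<forall>j<d. \<forall>k<d. \<psi> $ ((i * d + j) * d + k) = a k * b i j)"

definition biseparable_mixed :: "nat \<Rightarrow> complex mat \<Rightarrow> bool" where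
  "biseparable_mixed d \<rho> \<longleftrightarrow>
     (\<exists>(m::nat) (p::nat \<Rightarrow> real) (\<psi>::nat \<Rightarrow> complex vec).
        (\<forall>l<m. 0 \<le> p l \<and> unit_vec_c (d^3) (\<psi> l) \<and> biseparable_pure d (\<psi> l)) \<and>
        (\<Sum>l<m. p l) = 1 \<and>
        \<rho> = mat (d^3) (d^3) (\<lambda>(r, c). \<Sum>l<m. complex_of_real (p l) * \<psi> l $ r * cnj (\<psi> l $ c)))"

definition genuinely_tripartite_entangled :: "nat \<Rightarrow> complex mat \<Rightarrow> bool" where
  "genuinely_tripartite_entangled d \<rho> \<longleftrightarrow> density (d^3) \<rho> \<and> \<not> biseparable_mixed d \<rho>"

end

theory Submission
  imports Defs
begin


lemma adj_dims[simp]: "dim_row (mat_adjoint A) = dim_col A" "dim_col (mat_adjoint A) = dim_row A"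
  unfolding mat_adjoint_def by (auto simp: mat_of_rows_def)

lemma adj_index[simp]: "i < dim_col A \<Longrightarrow> j < dim_row A \<Longrightarrow> mat_adjoint A $$ (i,j) = conjugate (A $$ (j,i))"
  unfolding mat_adjoint_def by (auto simp: mat_of_rows_def)

lemma mult_index: "i < dim_row A \<Longrightarrow> j < dim_col B \<Longrightarrow> dim_col A = dim_row B \<Longrightarrow>
   (A * B) $$ (i,j) = (\<Sum>k<dim_col A. A $$ (i,k) * B $$ (k,j))"
  by (simp add: scalar_prod_def lessThan_atLeast0)

definition Sm :: "nat \<Rightarrow> (nat \<Rightarrow> nat) \<Rightarrow> complex mat \<Rightarrow> nat \<Rightarrow> nat \<Rightarrow> complex" where
  "Sm d h \<rho> r c = (\<Sum>i<d. \<Sum>j<d. if h i = r \<and> h j = c then \<rho> $$ (i,j) else 0)"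

definition embedM :: "nat \<Rightarrow> nat \<Rightarrow> (nat \<Rightarrow> nat) \<Rightarrow> complex mat \<Rightarrow> complex mat" where
  "embedM n d h \<rho> = mat n n (\<lambda>(r,c). Sm d h \<rho> r c)"

lemma sum_delta2:
  fixes G :: "nat \<Rightarrow> nat \<Rightarrow> complex"
  assumes "a < n" "b < n"
  shows "(\<Sum>r<n. \<Sum>c<n. if a = r \<and> b = c then G r c else 0) = G a b"
proof -
  have "(\<Sum>r<n. \<Sum>c<n. if a = r \<and> b = c then G r c else 0) = (\<Sum>r<n. if a = r then G r b else 0)"
    apply (rule sum.cong, simp)
    using assms by (auto simp: sum.delta)
  also have "\<dots> = G a b" using assms by (simp add: sum.delta)
  finally show ?thesis .
qed

lemma S_at: assumes "inj_on h {..<d}" "a < d" "b < d"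
  shows "Sm d h \<rho> (h a) (h b) = \<rho> $$ (a,b)"
proof -
  have "Sm d h \<rho> (h a) (h b) = (\<Sum>i<d. \<Sum>j<d. if i = a \<and> j = b then \<rho> $$ (i,j) else 0)"
    unfolding Sm_def
    apply (rule sum.cong, simp, rule sum.cong, simp)
    using assms(1,2,3) by (auto dest: inj_onD)
  also have "\<dots> = (\<Sum>i<d. \<Sum>j<d. if a = i \<and> b = j then \<rho> $$ (i,j) else 0)"
    by (intro sum.cong) auto
  also have "\<dots> = \<rho> $$ (a,b)" using assms(2,3) by (rule sum_delta2)
  finally show ?thesis .
qed

lemma S_out1: "r \<notin> h ` {..<d} \<Longrightarrow> Sm d h \<rho> r c = 0"
  unfolding Sm_def by (intro sum.neutral ballI) auto
lemma S_out2: "c \<notin> h ` {..<d} \<Longrightarrow> Sm d h \<rho> r c = 0"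
  unfolding Sm_def by (intro sum.neutral ballI) auto

lemma swap4: "(\<Sum>r\<in>A. \<Sum>c\<in>B. \<Sum>i\<in>C. \<Sum>j\<in>D. F r c i j) = (\<Sum>i\<in>C. \<Sum>j\<in>D. \<Sum>r\<in>A. \<Sum>c\<in>B. F r c i j)"
proof -
  have "(\<Sum>r\<in>A. \<Sum>c\<in>B. \<Sum>i\<in>C. \<Sum>j\<in>D. F r c i j) = (\<Sum>r\<in>A. \<Sum>i\<in>C. \<Sum>c\<in>B. \<Sum>j\<in>D. F r c i j)"
    by (rule sum.cong[OF refl], rule sum.swap)
  also have "\<dots> = (\<Sum>i\<in>C. \<Sum>r\<in>A. \<Sum>c\<in>B. \<Sum>j\<in>D. F r c i j)" by (rule sum.swap)
  also have "\<dots> = (\<Sum>i\<in>C. \<Sum>r\<in>A. \<Sum>j\<in>D. \<Sum>c\<in>B. F r c i j)"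
    by (rule sum.cong[OF refl], rule sum.cong[OF refl], rule sum.swap)
  also have "\<dots> = (\<Sum>i\<in>C. \<Sum>j\<in>D. \<Sum>r\<in>A. \<Sum>c\<in>B. F r c i j)"
    by (rule sum.cong[OF refl], rule sum.swap)
  finally show ?thesis .
qed

lemma embedM_density:
  assumes inj: "inj_on h {..<d}" and hn: "\<And>i. i < d \<Longrightarrow> h i < n" and dens: "density d \<rho>"
  shows "density n (embedM n d h \<rho>)"
proof -
  let ?M = "embedM n d h \<rho>"
  have car: "\<rho> \<in> carrier_mat d d" and adj: "mat_adjoint \<rho> = \<rho>" and tr: "(\<Sum>i<d. \<rho> $$ (i, i)) = 1"
    and pos: "\<And>v. v \<in> carrier_vec d \<Longrightarrow> 0 \<le> Re (\<Sum>i<d. \<Sum>j<d. cnj (v $ i) * \<rho> $$ (i, j) * v $ j)"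
    using dens unfolding density_def by auto
  have herm: "cnj (\<rho> $$ (j,i)) = \<rho> $$ (i,j)" if "i < d" "j < d" for i j
  proof -
    have "mat_adjoint \<rho> $$ (i,j) = cnj (\<rho> $$ (j,i))" using car that by simp
    then show ?thesis using adj by simp
  qed
  have Mc: "?M \<in> carrier_mat n n" unfolding embedM_def by simp
  have A1: "mat_adjoint ?M = ?M"
  proof (rule eq_matI)
    fix r c assume rc: "r < dim_row ?M" "c < dim_col ?M"
    then have rc': "r < n" "c < n" unfolding embedM_def by auto
    have "mat_adjoint ?M $$ (r,c) = cnj (Sm d h \<rho> c r)" using rc' by (simp add: embedM_def)
    also have "\<dots> = (\<Sum>i<d. \<Sum>j<d. if h i = c \<and> h j = r then \<rho> $$ (j,i) else 0)"
      unfolding Sm_def by (auto simp: herm intro!: sum.cong)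
    also have "\<dots> = Sm d h \<rho> r c" unfolding Sm_def by (subst sum.swap) (auto intro!: sum.cong)
    finally show "mat_adjoint ?M $$ (r,c) = ?M $$ (r,c)" using rc' by (simp add: embedM_def)
  qed (auto simp: embedM_def)
  have A2: "(\<Sum>r<n. ?M $$ (r,r)) = 1"
  proof -
    have "(\<Sum>r<n. ?M $$ (r,r)) = (\<Sum>r<n. \<Sum>i<d. \<Sum>j<d. if h i = r \<and> h j = r then \<rho> $$ (i,j) else 0)"
      by (simp add: embedM_def Sm_def)
    also have "\<dots> = (\<Sum>i<d. \<Sum>j<d. \<Sum>r<n. if h i = r \<and> h j = r then \<rho> $$ (i,j) else 0)"
      by (subst sum.swap) (simp add: sum.swap[of _ "{..<n}"])
    also have "\<dots> = (\<Sum>i<d. \<Sum>j<d. if h i = h j then \<rho> $$ (i,j) else 0)"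
      apply (rule sum.cong, simp, rule sum.cong, simp)
      subgoal for i j apply (cases "h i = h j") using hn[of i] apply (simp add: sum.delta) by (auto intro!: sum.neutral)
      done
    also have "\<dots> = (\<Sum>i<d. \<Sum>j<d. if i = j then \<rho> $$ (i,j) else 0)"
      apply (rule sum.cong, simp, rule sum.cong, simp)
      using inj by (auto dest: inj_onD)
    also have "\<dots> = 1" using tr by (simp add: sum.delta)
    finally show ?thesis .
  qed
  have A3: "0 \<le> Re (\<Sum>r<n. \<Sum>c<n. cnj (v $ r) * ?M $$ (r, c) * v $ c)" if v: "v \<in> carrier_vec n" for v
  proof -
    let ?w = "vec d (\<lambda>i. v $ h i)"
    have "(\<Sum>r<n. \<Sum>c<n. cnj (v $ r) * ?M $$ (r, c) * v $ c)
       = (\<Sum>r<n. \<Sum>c<n. \<Sum>i<d. \<Sum>j<d. if h i = r \<and> h j = c then cnj (v $ r) * \<rho> $$ (i,j) * v $ c else 0)"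
      apply (rule sum.cong, simp, rule sum.cong, simp)
      apply (simp add: embedM_def Sm_def sum_distrib_left sum_distrib_right)
      by (intro sum.cong) auto
    also have "\<dots> = (\<Sum>i<d. \<Sum>j<d. \<Sum>r<n. \<Sum>c<n. if h i = r \<and> h j = c then cnj (v $ r) * \<rho> $$ (i,j) * v $ c else 0)"
      by (rule swap4)
    also have "\<dots> = (\<Sum>i<d. \<Sum>j<d. cnj (?w $ i) * \<rho> $$ (i,j) * ?w $ j)"
      apply (rule sum.cong, simp, rule sum.cong, simp)
      subgoal for i j using hn[of i] hn[of j] sum_delta2[of "h i" n "h j" "\<lambda>r c. cnj (v $ r) * \<rho> $$ (i,j) * v $ c"] by simp
      done
    finally show ?thesis using pos[of ?w] by simp
  qed
  show ?thesis unfolding density_def using Mc A1 A2 A3 by blast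
qed



definition enc :: "nat \<Rightarrow> nat \<Rightarrow> nat \<Rightarrow> nat \<Rightarrow> nat" where
  "enc d x y z = (x * d + y) * d + z"

lemma enc_lt: assumes a: "x < d" "y < d" "z < d" shows "enc d x y z < d^3"
proof -
  have "x * d + y < (x + 1) * d" using a by simp
  also have "(x + 1) * d \<le> d * d" using a by (intro mult_le_mono1) simp
  finally have 1: "x * d + y + 1 \<le> d * d" by simp
  have "(x*d+y)*d + z < (x*d+y)*d + d" using a by simp
  also have "\<dots> = (x*d+y+1)*d" by simp
  also have "\<dots> \<le> d*d*d" using 1 by (intro mult_le_mono1)
  finally show ?thesis by (simp add: enc_def power3_eq_cube)
qed

lemma enc_div: assumes "y < d" "z < d"
  shows "enc d x y z div d div d = x" "enc d x y z div d mod d = y" "enc d x y z mod d = z"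
  using assms by (auto simp: enc_def)

lemma enc_inj: assumes "y < d" "z < d" "y' < d" "z' < d"
  shows "enc d x y z = enc d x' y' z' \<longleftrightarrow> x = x' \<and> y = y' \<and> z = z'"
proof
  assume e: "enc d x y z = enc d x' y' z'"
  have "x = x'" using arg_cong[OF e, of "\<lambda>r. r div d div d"] enc_div assms by simp
  moreover have "y = y'" using arg_cong[OF e, of "\<lambda>r. r div d mod d"] enc_div assms by simp
  moreover have "z = z'" using arg_cong[OF e, of "\<lambda>r. r mod d"] enc_div assms by simp
  ultimately show "x = x' \<and> y = y' \<and> z = z'" by simp
qed simp

lemma enc_surj: assumes "r < d^3"
  shows "r div d div d < d" "r div d mod d < d" "r mod d < d"
    "enc d (r div d div d) (r div d mod d) (r mod d) = r"
proof -
  have d: "d > 0" using assms by (cases d) auto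
  have "r < d * (d*d)" using assms by (simp add: power3_eq_cube mult.assoc)
  then show "r div d div d < d"
    by (simp add: div_mult2_eq[symmetric] less_mult_imp_div_less)
  show "r div d mod d < d" "r mod d < d" using d by auto
  show "enc d (r div d div d) (r div d mod d) (r mod d) = r"
    by (simp add: enc_def)
qed

lemma modA: assumes "x < (d::nat)" "y < d" shows "((y + d - x) mod d + x) mod d = y"
proof (cases "x \<le> y")
  case True
  have e: "y + d - x = (y - x) + d" using True by arith
  have l: "y - x < d" using assms by arith
  have "(y + d - x) mod d = y - x" unfolding e mod_add_self2 using l by (rule mod_less)
  moreover have "y - x + x = y" using True by arith
  ultimately show ?thesis using assms(2) by (metis mod_less)
next
  case False
  have l: "y + d - x < d" using False assms by arith
  have "(y + d - x) mod d = y + d - x" using l by (rule mod_less)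
  moreover have "y + d - x + x = y + d" using False assms by arith
  ultimately show ?thesis using assms(2) by (metis mod_add_self2 mod_less)
qed

lemma modB: assumes "x < (d::nat)" "y < d" shows "((y + x) mod d + d - x) mod d = y"
proof (cases "y + x < d")
  case True
  have "(y + x) mod d = y + x" using True by (rule mod_less)
  moreover have "y + x + d - x = y + d" by arith
  ultimately show ?thesis using assms(2) by (metis mod_add_self2 mod_less)
next
  case False
  have e: "y + x = (y + x - d) + d" using False by arith
  have l: "y + x - d < d" using assms by arith
  have "(y + x) mod d = y + x - d" by (subst e, unfold mod_add_self2, rule mod_less[OF l])
  moreover have "y + x - d + d - x = y" using False by arith
  ultimately show ?thesis using assms(2) by (metis mod_less)
qed

definition ff :: "nat \<Rightarrow> nat \<Rightarrow> nat" where
  "ff d r = enc d (r div d div d) ((r div d mod d + r div d div d) mod d) ((r mod d + r div d div d) mod d)"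
definition gg :: "nat \<Rightarrow> nat \<Rightarrow> nat" where
  "gg d r = enc d (r div d div d) ((r div d mod d + d - r div d div d) mod d) ((r mod d + d - r div d div d) mod d)"

lemma ff_enc: "y < d \<Longrightarrow> z < d \<Longrightarrow> ff d (enc d x y z) = enc d x ((y+x) mod d) ((z+x) mod d)"
  by (simp add: ff_def enc_div)
lemma gg_enc: "y < d \<Longrightarrow> z < d \<Longrightarrow> gg d (enc d x y z) = enc d x ((y+d-x) mod d) ((z+d-x) mod d)"
  by (simp add: gg_def enc_div)

lemma d_pos: "r < d^3 \<Longrightarrow> 0 < (d::nat)" by (cases d) auto

lemma ff_lt: "r < d^3 \<Longrightarrow> ff d r < d^3"
  unfolding ff_def using enc_surj[of r d] d_pos[of r d] by (intro enc_lt) auto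
lemma gg_lt: "r < d^3 \<Longrightarrow> gg d r < d^3"
  unfolding gg_def using enc_surj[of r d] d_pos[of r d] by (intro enc_lt) auto

lemma ff_gg: assumes "r < d^3" shows "ff d (gg d r) = r"
proof -
  define x y z where "x = r div d div d" "y = r div d mod d" "z = r mod d"
  have xyz: "x < d" "y < d" "z < d" "r = enc d x y z" using enc_surj[OF assms] unfolding x_y_z_def by auto
  have d: "d > 0" using xyz by auto
  have 1: "gg d r = enc d x ((y+d-x) mod d) ((z+d-x) mod d)" unfolding xyz(4) using xyz(2,3) by (rule gg_enc)
  have 2: "ff d (enc d x ((y+d-x) mod d) ((z+d-x) mod d)) = enc d x (((y+d-x) mod d + x) mod d) (((z+d-x) mod d + x) mod d)"
    using d by (intro ff_enc) auto
  show ?thesis unfolding 1 2 modA[OF xyz(1,2)] modA[OF xyz(1,3)] xyz(4)[symmetric] ..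
qed

lemma gg_ff: assumes "r < d^3" shows "gg d (ff d r) = r"
proof -
  define x y z where "x = r div d div d" "y = r div d mod d" "z = r mod d"
  have xyz: "x < d" "y < d" "z < d" "r = enc d x y z" using enc_surj[OF assms] unfolding x_y_z_def by auto
  have d: "d > 0" using xyz by auto
  have 1: "ff d r = enc d x ((y+x) mod d) ((z+x) mod d)" unfolding xyz(4) using xyz(2,3) by (rule ff_enc)
  have 2: "gg d (enc d x ((y+x) mod d) ((z+x) mod d)) = enc d x (((y+x) mod d + d - x) mod d) (((z+x) mod d + d - x) mod d)"
    using d by (intro gg_enc) auto
  show ?thesis unfolding 1 2 modB[OF xyz(1,2)] modB[OF xyz(1,3)] xyz(4)[symmetric] ..
qed

lemma gg_iff: "r < d^3 \<Longrightarrow> a < d^3 \<Longrightarrow> gg d r = a \<longleftrightarrow> r = ff d a"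
  using ff_gg[of r d] gg_ff[of a d] by auto

lemma ff_enc0: "x < d \<Longrightarrow> ff d (enc d x 0 0) = enc d x x x"
  using ff_enc[of 0 d 0 x] by simp



lemma foldr_diag:
  assumes "\<forall>K\<in>set Ks. is_diag n (K * \<tau> * mat_adjoint K)"
  shows "is_diag n (apply_kraus n Ks \<tau>) \<and> apply_kraus n Ks \<tau> \<in> carrier_mat n n"
  using assms unfolding apply_kraus_def
proof (induction Ks)
  case Nil
  then show ?case by (auto simp: is_diag_def)
next
  case (Cons K Ks)
  let ?B = "foldr (\<lambda>K acc. K * \<tau> * mat_adjoint K + acc) Ks (0\<^sub>m n n)"
  have IH: "is_diag n ?B" "?B \<in> carrier_mat n n" using Cons by auto
  have dK: "is_diag n (K * \<tau> * mat_adjoint K)" using Cons.prems by auto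
  show ?case using IH dK unfolding is_diag_def by auto
qed

lemma diag_bisep:
  assumes dens: "density (d^3) M" and dg: "is_diag (d^3) M"
  shows "biseparable_mixed d M"
proof -
  let ?n = "d^3"
  define p where "p = (\<lambda>l. Re (M $$ (l,l)))"
  define \<psi> where "\<psi> = (\<lambda>l. vec ?n (\<lambda>j. if j = l then 1 else (0::complex)))"
  have car: "M \<in> carrier_mat ?n ?n" and adj: "mat_adjoint M = M" and tr: "(\<Sum>i<?n. M $$ (i, i)) = 1"
    and pos: "\<And>v. v \<in> carrier_vec ?n \<Longrightarrow> 0 \<le> Re (\<Sum>i<?n. \<Sum>j<?n. cnj (v $ i) * M $$ (i, j) * v $ j)"
    using dens unfolding density_def by auto
  have real: "M $$ (l,l) = complex_of_real (p l)" if "l < ?n" for l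
  proof -
    have "mat_adjoint M $$ (l,l) = cnj (M $$ (l,l))" using car that by simp
    then have "cnj (M $$ (l,l)) = M $$ (l,l)" using adj by simp
    then have "Im (cnj (M $$ (l,l))) = Im (M $$ (l,l))" by simp
    then have "Im (M $$ (l,l)) = 0" by simp
    then show ?thesis unfolding p_def by (simp add: complex_eq_iff)
  qed
  have "\<forall>l<?n. 0 \<le> p l \<and> unit_vec_c ?n (\<psi> l) \<and> biseparable_pure d (\<psi> l)"
  proof (intro allI impI conjI)
    fix l assume l: "l < ?n"
    have inner: "(\<Sum>j<?n. cnj (\<psi> l $ i) * M $$ (i, j) * \<psi> l $ j) = (if i = l then M $$ (l,l) else 0)"
      if i: "i < ?n" for i
    proof -
      have "(\<Sum>j<?n. cnj (\<psi> l $ i) * M $$ (i, j) * \<psi> l $ j) = (\<Sum>j<?n. if j = l then cnj (\<psi> l $ i) * M $$ (i, l) else 0)"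
        by (intro sum.cong) (auto simp: \<psi>_def)
      also have "\<dots> = cnj (\<psi> l $ i) * M $$ (i, l)" using l by simp
      also have "\<dots> = (if i = l then M $$ (l,l) else 0)" using i by (simp add: \<psi>_def)
      finally show ?thesis .
    qed
    have "(\<Sum>i<?n. \<Sum>j<?n. cnj (\<psi> l $ i) * M $$ (i, j) * \<psi> l $ j) = (\<Sum>i<?n. if i = l then M $$ (l,l) else 0)"
      using inner by (intro sum.cong) auto
    also have "\<dots> = M $$ (l,l)" using l by simp
    finally have "(\<Sum>i<?n. \<Sum>j<?n. cnj (\<psi> l $ i) * M $$ (i, j) * \<psi> l $ j) = M $$ (l,l)" .
    then show "0 \<le> p l" using pos[of "\<psi> l"] unfolding p_def by (simp add: \<psi>_def)
    have "(\<Sum>i<?n. (cmod (\<psi> l $ i))\<^sup>2) = (\<Sum>i<?n. if i = l then 1 else 0)"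
      by (intro sum.cong) (auto simp: \<psi>_def)
    then show "unit_vec_c ?n (\<psi> l)" unfolding unit_vec_c_def using l by (simp add: \<psi>_def)
    define x y z where "x = l div d div d" "y = l div d mod d" "z = l mod d"
    have xyz: "x < d" "y < d" "z < d" "l = enc d x y z" using enc_surj[OF l] unfolding x_y_z_def by auto
    have "\<forall>i<d. \<forall>j<d. \<forall>k<d. \<psi> l $ ((i * d + j) * d + k) = (if i = x then 1 else 0) * (if j = y \<and> k = z then 1 else 0)"
    proof (intro allI impI)
      fix i j k assume ijk: "i < d" "j < d" "k < d"
      have e1: "(i * d + j) * d + k = enc d i j k" by (simp add: enc_def)
      have e2: "enc d i j k < ?n" using ijk by (rule enc_lt)
      show "\<psi> l $ ((i * d + j) * d + k) = (if i = x then 1 else 0) * (if j = y \<and> k = z then 1 else 0)"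
      proof -
        have "enc d i j k = l \<longleftrightarrow> i = x \<and> j = y \<and> k = z" using ijk xyz enc_inj[of j d k y z i x] by simp
        then show ?thesis using e1 e2 unfolding \<psi>_def by simp
      qed
    qed
    then show "biseparable_pure d (\<psi> l)" unfolding biseparable_pure_def
      by (intro disjI1 exI[of _ "\<lambda>i. if i = x then 1 else 0"] exI[of _ "\<lambda>j k. if j = y \<and> k = z then 1 else 0"])
  qed
  moreover have "(\<Sum>l<?n. p l) = 1"
  proof -
    have "(\<Sum>l<?n. p l) = Re (\<Sum>i<?n. M $$ (i, i))" unfolding p_def by simp
    then show ?thesis using tr by simp
  qed
  moreover have "M = mat ?n ?n (\<lambda>(r, c). \<Sum>l<?n. complex_of_real (p l) * \<psi> l $ r * cnj (\<psi> l $ c))"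
  proof (rule eq_matI)
    fix r c assume rc: "r < dim_row (mat ?n ?n (\<lambda>(r, c). \<Sum>l<?n. complex_of_real (p l) * \<psi> l $ r * cnj (\<psi> l $ c)))"
      "c < dim_col (mat ?n ?n (\<lambda>(r, c). \<Sum>l<?n. complex_of_real (p l) * \<psi> l $ r * cnj (\<psi> l $ c)))"
    then have rc': "r < ?n" "c < ?n" by auto
    have "(\<Sum>l<?n. complex_of_real (p l) * \<psi> l $ r * cnj (\<psi> l $ c)) = (\<Sum>l<?n. if l = r then (if r = c then complex_of_real (p r) else 0) else 0)"
      using rc' by (intro sum.cong) (auto simp: \<psi>_def)
    also have "\<dots> = (if r = c then complex_of_real (p r) else 0)" using rc' by (simp add: sum.delta')
    also have "\<dots> = M $$ (r,c)" using real[of r] dg rc' unfolding is_diag_def by auto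
    finally show "M $$ (r, c) = mat ?n ?n (\<lambda>(r, c). \<Sum>l<?n. complex_of_real (p l) * \<psi> l $ r * cnj (\<psi> l $ c)) $$ (r, c)"
      using rc' by simp
  qed (use car in auto)
  ultimately show ?thesis unfolding biseparable_mixed_def
    by (intro exI[of _ "d^3"] exI[of _ p] exI[of _ \<psi>] conjI)
qed



definition Kmat :: "nat \<Rightarrow> complex mat" where
  "Kmat d = mat (d^3) (d^3) (\<lambda>(r,c). if c = gg d r then 1 else 0)"

lemma Kmat_carrier: "Kmat d \<in> carrier_mat (d^3) (d^3)" unfolding Kmat_def by simp

lemma K_conj:
  assumes s: "\<sigma> \<in> carrier_mat (d^3) (d^3)" and r: "r < d^3" and c: "c < d^3"
  shows "(Kmat d * \<sigma> * mat_adjoint (Kmat d)) $$ (r,c) = \<sigma> $$ (gg d r, gg d c)"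
proof -
  let ?n = "d^3"
  have 1: "(Kmat d * \<sigma>) $$ (r',b) = \<sigma> $$ (gg d r', b)" if "r' < ?n" "b < ?n" for r' b
  proof -
    have "(Kmat d * \<sigma>) $$ (r',b) = (\<Sum>k<?n. Kmat d $$ (r',k) * \<sigma> $$ (k,b))"
      using that s by (subst mult_index) (auto simp: Kmat_def)
    also have "\<dots> = (\<Sum>k<?n. if k = gg d r' then \<sigma> $$ (k,b) else 0)"
      using that by (intro sum.cong) (auto simp: Kmat_def)
    also have "\<dots> = \<sigma> $$ (gg d r', b)" using gg_lt[OF that(1)] by simp
    finally show ?thesis .
  qed
  have "(Kmat d * \<sigma> * mat_adjoint (Kmat d)) $$ (r,c) = (\<Sum>b<?n. (Kmat d * \<sigma>) $$ (r,b) * mat_adjoint (Kmat d) $$ (b,c))"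
    using r c s by (subst mult_index) (auto simp: Kmat_def)
  also have "\<dots> = (\<Sum>b<?n. if b = gg d c then (Kmat d * \<sigma>) $$ (r,b) else 0)"
  proof (intro sum.cong refl)
    fix b assume "b \<in> {..<?n}"
    then have b: "b < ?n" by simp
    have "mat_adjoint (Kmat d) $$ (b,c) = (if b = gg d c then 1 else 0)"
      using b c by (simp add: Kmat_def)
    then show "(Kmat d * \<sigma>) $$ (r,b) * mat_adjoint (Kmat d) $$ (b,c) = (if b = gg d c then (Kmat d * \<sigma>) $$ (r,b) else 0)"
      by simp
  qed
  also have "\<dots> = (Kmat d * \<sigma>) $$ (r, gg d c)" using gg_lt[OF c] by simp
  also have "\<dots> = \<sigma> $$ (gg d r, gg d c)" using 1[OF r gg_lt[OF c]] .
  finally show ?thesis .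
qed

lemma K_unitary: "mat_adjoint (Kmat d) * Kmat d = 1\<^sub>m (d^3)"
proof (rule eq_matI)
  let ?n = "d^3"
  fix a b assume ab: "a < dim_row (1\<^sub>m ?n :: complex mat)" "b < dim_col (1\<^sub>m ?n :: complex mat)"
  then have ab': "a < ?n" "b < ?n" by auto
  have "(mat_adjoint (Kmat d) * Kmat d) $$ (a,b) = (\<Sum>r<?n. mat_adjoint (Kmat d) $$ (a,r) * Kmat d $$ (r,b))"
    using ab' by (subst mult_index) (auto simp: Kmat_def)
  also have "\<dots> = (\<Sum>r<?n. if r = ff d a then (if b = a then 1 else 0) else 0)"
  proof (intro sum.cong refl)
    fix r assume "r \<in> {..<?n}"
    then have r: "r < ?n" by simp
    have "mat_adjoint (Kmat d) $$ (a,r) * Kmat d $$ (r,b) = (if a = gg d r then 1 else 0) * (if b = gg d r then 1 else 0)"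
      using r ab' by (simp add: Kmat_def)
    also have "\<dots> = (if r = ff d a then (if b = a then 1 else 0) else 0)"
      using gg_iff[OF r ab'(1)] gg_iff[OF r ab'(2)] by auto
    finally show "mat_adjoint (Kmat d) $$ (a,r) * Kmat d $$ (r,b) = (if r = ff d a then (if b = a then 1 else 0) else 0)" .
  qed
  also have "\<dots> = (if b = a then 1 else 0)" using ff_lt[OF ab'(1)] by simp
  finally show "(mat_adjoint (Kmat d) * Kmat d) $$ (a,b) = 1\<^sub>m ?n $$ (a,b)" using ab' by auto
qed (auto simp: Kmat_def)

lemma inj_h0: "0 < d \<Longrightarrow> inj_on (\<lambda>i. enc d i 0 0) {..<d}"
  by (rule inj_onI) (simp add: enc_inj)
lemma inj_h1: "inj_on (\<lambda>i. enc d i i i) {..<d}"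
  by (rule inj_onI) (simp add: enc_inj)

lemma kron_dims[simp]: "dim_row (kron A B) = dim_row A * dim_row B" "dim_col (kron A B) = dim_col A * dim_col B"
  unfolding kron_def by auto
lemma kron_index: "r < dim_row A * dim_row B \<Longrightarrow> c < dim_col A * dim_col B \<Longrightarrow>
  kron A B $$ (r,c) = A $$ (r div dim_row B, c div dim_col B) * B $$ (r mod dim_row B, c mod dim_col B)"
  unfolding kron_def by auto

lemma tau_eq:
  assumes car: "\<rho> \<in> carrier_mat d d" and d: "0 < d"
  shows "kron (kron \<rho> (ket0_proj d)) (ket0_proj d) = embedM (d^3) d (\<lambda>i. enc d i 0 0) \<rho>"
proof (rule eq_matI)
  let ?n = "d^3"
  let ?h = "\<lambda>i. enc d i 0 0"
  have P: "ket0_proj d \<in> carrier_mat d d" unfolding ket0_proj_def by simp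
  have Pi: "ket0_proj d $$ (i,j) = (if i = 0 \<and> j = 0 then 1 else 0)" if "i < d" "j < d" for i j
    using that unfolding ket0_proj_def by simp
  fix r c assume rc: "r < dim_row (embedM ?n d ?h \<rho>)" "c < dim_col (embedM ?n d ?h \<rho>)"
  then have rc': "r < ?n" "c < ?n" unfolding embedM_def by auto
  obtain x y z where xyz: "x < d" "y < d" "z < d" "r = enc d x y z" using enc_surj[OF rc'(1)] by metis
  obtain x' y' z' where xyz': "x' < d" "y' < d" "z' < d" "c = enc d x' y' z'" using enc_surj[OF rc'(2)] by metis
  have cube: "d * d * d = ?n" by (simp add: power3_eq_cube)
  have rd: "r div d < d * d" "c div d < d * d"
    using rc' cube by (metis less_mult_imp_div_less)+
  have "kron (kron \<rho> (ket0_proj d)) (ket0_proj d) $$ (r,c)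
      = \<rho> $$ (x, x') * (if y = 0 \<and> y' = 0 then 1 else 0) * (if z = 0 \<and> z' = 0 then 1 else 0)"
    using car P rc' rd cube xyz xyz' by (simp add: kron_index Pi enc_div)
  also have "\<dots> = Sm d ?h \<rho> r c"
  proof (cases "y = 0 \<and> z = 0 \<and> y' = 0 \<and> z' = 0")
    case True
    then show ?thesis using S_at[OF inj_h0[OF d] xyz(1) xyz'(1), of \<rho>] xyz xyz' by simp
  next
    case False
    have nr: "r \<notin> ?h ` {..<d}" if "y \<noteq> 0 \<or> z \<noteq> 0"
    proof
      assume "r \<in> ?h ` {..<d}"
      then obtain i where "enc d x y z = enc d i 0 0" using xyz(4) by auto
      then show False using enc_inj[OF xyz(2,3) d d, of x i] that by simp
    qed
    have nc: "c \<notin> ?h ` {..<d}" if "y' \<noteq> 0 \<or> z' \<noteq> 0"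
    proof
      assume "c \<in> ?h ` {..<d}"
      then obtain i where "enc d x' y' z' = enc d i 0 0" using xyz'(4) by auto
      then show False using enc_inj[OF xyz'(2,3) d d, of x' i] that by simp
    qed
    show ?thesis
    proof (cases "y \<noteq> 0 \<or> z \<noteq> 0")
      case True
      then show ?thesis using S_out1[OF nr[OF True]] by auto
    next
      case F2: False
      then have "y' \<noteq> 0 \<or> z' \<noteq> 0" using False by auto
      then show ?thesis using S_out2[OF nc] by auto
    qed
  qed
  finally show "kron (kron \<rho> (ket0_proj d)) (ket0_proj d) $$ (r,c) = embedM ?n d ?h \<rho> $$ (r,c)"
    using rc' by (simp add: embedM_def)
qed (use assms in \<open>auto simp: embedM_def ket0_proj_def power3_eq_cube\<close>)


lemma enc_not_diag: assumes "i \<noteq> j" "i < d" "j < d" "a < d" "b < d" "c < d"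
  and "{a,b,c} = {i,j}"
  shows "enc d a b c \<notin> (\<lambda>t. enc d t t t) ` {..<d}"
proof
  assume "enc d a b c \<in> (\<lambda>t. enc d t t t) ` {..<d}"
  then obtain t where t: "t < d" "enc d a b c = enc d t t t" by auto
  then have "a = t \<and> b = t \<and> c = t" using enc_inj[of b d c t t a t] assms by simp
  then show False using assms by auto
qed

lemma notbisep:
  assumes ij: "i < d" "j < d" "i \<noteq> j" "\<rho> $$ (i,j) \<noteq> 0"
  shows "\<not> biseparable_mixed d (embedM (d^3) d (\<lambda>t. enc d t t t) \<rho>)"
proof
  let ?n = "d^3"
  let ?h = "\<lambda>t. enc d t t t"
  define M where "M = embedM ?n d ?h \<rho>"
  assume "biseparable_mixed d (embedM ?n d ?h \<rho>)"
  then obtain m :: nat and p :: "nat \<Rightarrow> real" and \<psi> :: "nat \<Rightarrow> complex vec" where X: "(\<forall>l<m. 0 \<le> p l \<and> unit_vec_c ?n (\<psi> l) \<and> biseparable_pure d (\<psi> l)) \<and>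
        (\<Sum>l<m. p l) = 1 \<and>
        embedM ?n d ?h \<rho> = mat ?n ?n (\<lambda>(r, c). \<Sum>l<m. complex_of_real (p l) * \<psi> l $ r * cnj (\<psi> l $ c))"
    unfolding biseparable_mixed_def by blast
  have H: "\<forall>l<m. 0 \<le> p l \<and> unit_vec_c ?n (\<psi> l) \<and> biseparable_pure d (\<psi> l)"
    and Meq0: "embedM ?n d ?h \<rho> = mat ?n ?n (\<lambda>(r, c). \<Sum>l<m. complex_of_real (p l) * \<psi> l $ r * cnj (\<psi> l $ c))"
    using X by auto
  have Meq: "M = mat ?n ?n (\<lambda>(r, c). \<Sum>l<m. complex_of_real (p l) * \<psi> l $ r * cnj (\<psi> l $ c))"
    unfolding M_def by (rule Meq0)
  have Mrc: "M $$ (r,c) = (\<Sum>l<m. complex_of_real (p l) * \<psi> l $ r * cnj (\<psi> l $ c))" if "r < ?n" "c < ?n" for r c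
    using that by (subst Meq) simp
  have zero: "p l = 0 \<or> \<psi> l $ r = 0" if r: "r < ?n" "r \<notin> ?h ` {..<d}" and l: "l < m" for r l
  proof -
    have "M $$ (r,r) = 0" using r S_out1[OF r(2)] unfolding M_def embedM_def by simp
    moreover have "M $$ (r,r) = complex_of_real (\<Sum>l<m. p l * (cmod (\<psi> l $ r))\<^sup>2)"
      unfolding Mrc[OF r(1) r(1)] of_real_sum of_real_mult complex_norm_square by (simp add: mult.assoc)
    ultimately have c0: "complex_of_real (\<Sum>l<m. p l * (cmod (\<psi> l $ r))\<^sup>2) = 0" by metis
    have s0: "(\<Sum>l<m. p l * (cmod (\<psi> l $ r))\<^sup>2) = 0" using c0 by (simp only: of_real_eq_0_iff)
    have "\<forall>l\<in>{..<m}. p l * (cmod (\<psi> l $ r))\<^sup>2 = 0"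
      using iffD1[OF sum_nonneg_eq_0_iff s0] H by auto
    then show ?thesis using l by auto
  qed
  have r1: "enc d i j j < ?n" "enc d i j j \<notin> ?h ` {..<d}"
    using ij enc_lt[of i d j j] enc_not_diag[of i j d i j j] by auto
  have r2: "enc d j i j < ?n" "enc d j i j \<notin> ?h ` {..<d}"
    using ij enc_lt[of j d i j] enc_not_diag[of i j d j i j] by auto
  have r3: "enc d j j i < ?n" "enc d j j i \<notin> ?h ` {..<d}"
    using ij enc_lt[of j d j i] enc_not_diag[of i j d j j i] by auto
  have term0: "complex_of_real (p l) * \<psi> l $ (enc d i i i) * cnj (\<psi> l $ (enc d j j j)) = 0" if l: "l < m" for l
  proof (cases "p l = 0")
    case True then show ?thesis by simp
  next
    case False
    have z1: "\<psi> l $ enc d i j j = 0" using zero[OF r1 l] False by simp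
    have z2: "\<psi> l $ enc d j i j = 0" using zero[OF r2 l] False by simp
    have z3: "\<psi> l $ enc d j j i = 0" using zero[OF r3 l] False by simp
    have bp: "biseparable_pure d (\<psi> l)" using H l by auto
    have "\<psi> l $ (enc d i i i) * cnj (\<psi> l $ (enc d j j j)) = 0"
      using bp unfolding biseparable_pure_def
    proof (elim disjE exE)
      fix a b assume ab: "\<forall>x<d. \<forall>y<d. \<forall>z<d. \<psi> l $ ((x * d + y) * d + z) = a x * b y z"
      have e: "\<psi> l $ enc d x y z = a x * b y z" if "x < d" "y < d" "z < d" for x y z
        using ab that unfolding enc_def by blast
      have "a i * b j j = 0" using z1 e ij by simp
      then show ?thesis using e ij by auto
    next
      fix a b assume ab: "\<forall>x<d. \<forall>y<d. \<forall>z<d. \<psi> l $ ((x * d + y) * d + z) = a y * b x z"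
      have e: "\<psi> l $ enc d x y z = a y * b x z" if "x < d" "y < d" "z < d" for x y z
        using ab that unfolding enc_def by blast
      have "a i * b j j = 0" using z2 e ij by simp
      then show ?thesis using e ij by auto
    next
      fix a b assume ab: "\<forall>x<d. \<forall>y<d. \<forall>z<d. \<psi> l $ ((x * d + y) * d + z) = a z * b x y"
      have e: "\<psi> l $ enc d x y z = a z * b x y" if "x < d" "y < d" "z < d" for x y z
        using ab that unfolding enc_def by blast
      have "a i * b j j = 0" using z3 e ij by simp
      then show ?thesis using e ij by auto
    qed
    then show ?thesis by simp
  qed
  have "M $$ (enc d i i i, enc d j j j) = \<rho> $$ (i,j)"
    using S_at[OF inj_h1 ij(1,2), of \<rho>] enc_lt[of i d i i] enc_lt[of j d j j] ij
    unfolding M_def embedM_def by simp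
  moreover have "M $$ (enc d i i i, enc d j j j) = 0"
  proof -
    have "M $$ (enc d i i i, enc d j j j) = (\<Sum>l<m. complex_of_real (p l) * \<psi> l $ (enc d i i i) * cnj (\<psi> l $ (enc d j j j)))"
      using enc_lt[of i d i i] enc_lt[of j d j j] ij by (intro Mrc) auto
    also have "\<dots> = 0" using term0 by (intro sum.neutral) auto
    finally show ?thesis .
  qed
  ultimately show False using ij by simp
qed



theorem theorem4:
  fixes d :: nat and \<rho>s :: "complex mat"
  assumes "d \<ge> 2" and "density d \<rho>s"
  shows "(\<exists>Ks. incoherent_operation (d^3) Ks \<and>
            genuinely_tripartite_entangled d
              (apply_kraus (d^3) Ks (kron (kron \<rho>s (ket0_proj d)) (ket0_proj d))))
         \<longleftrightarrow> coherent_state d \<rho>s"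
proof -
  let ?n = "d^3"
  let ?h0 = "\<lambda>i. enc d i 0 0"
  let ?h1 = "\<lambda>t. enc d t t t"
  let ?\<tau> = "kron (kron \<rho>s (ket0_proj d)) (ket0_proj d)"
  have d: "0 < d" using assms(1) by simp
  have car: "\<rho>s \<in> carrier_mat d d" using assms(2) unfolding density_def by simp
  have teq: "?\<tau> = embedM ?n d ?h0 \<rho>s" using tau_eq[OF car d] .
  have h0n: "?h0 i < ?n" if "i < d" for i using that d by (intro enc_lt) auto
  have h1n: "?h1 i < ?n" if "i < d" for i using that by (intro enc_lt) auto
  have tdens: "density ?n ?\<tau>" unfolding teq by (rule embedM_density[OF inj_h0[OF d] h0n assms(2)])
  show ?thesis
  proof
    assume "\<exists>Ks. incoherent_operation ?n Ks \<and> genuinely_tripartite_entangled d (apply_kraus ?n Ks ?\<tau>)"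
    then obtain Ks where io: "incoherent_operation ?n Ks" and gte: "genuinely_tripartite_entangled d (apply_kraus ?n Ks ?\<tau>)"
      by blast
    have "\<not> is_diag d \<rho>s"
    proof
      assume dg: "is_diag d \<rho>s"
      have "is_diag ?n ?\<tau>" unfolding is_diag_def
      proof (intro allI impI)
        fix r c assume rc: "r < ?n" "c < ?n" "r \<noteq> c"
        have "Sm d ?h0 \<rho>s r c = 0" unfolding Sm_def
          using rc(3) dg unfolding is_diag_def by (intro sum.neutral ballI) auto
        then show "?\<tau> $$ (r,c) = 0" unfolding teq embedM_def using rc by simp
      qed
      then have "incoherent_state ?n ?\<tau>" using tdens unfolding incoherent_state_def by simp
      then have "\<forall>K\<in>set Ks. is_diag ?n (K * ?\<tau> * mat_adjoint K)"
        using io unfolding incoherent_operation_def by blast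
      then have "is_diag ?n (apply_kraus ?n Ks ?\<tau>)" using foldr_diag by blast
      moreover have "density ?n (apply_kraus ?n Ks ?\<tau>)" using gte unfolding genuinely_tripartite_entangled_def by simp
      ultimately have "biseparable_mixed d (apply_kraus ?n Ks ?\<tau>)" using diag_bisep by blast
      then show False using gte unfolding genuinely_tripartite_entangled_def by simp
    qed
    then show "coherent_state d \<rho>s" using assms(2) unfolding coherent_state_def by simp
  next
    assume "coherent_state d \<rho>s"
    then have "\<not> is_diag d \<rho>s" unfolding coherent_state_def by simp
    then obtain i j where ij: "i < d" "j < d" "i \<noteq> j" "\<rho>s $$ (i,j) \<noteq> 0" unfolding is_diag_def by blast
    let ?K = "Kmat d"
    have Kc: "?K \<in> carrier_mat ?n ?n" by (rule Kmat_carrier)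
    have kc: "kraus_channel ?n [?K]" unfolding kraus_channel_def
    proof
      show "set [?K] \<subseteq> carrier_mat ?n ?n" using Kc by simp
      have "mat_adjoint ?K * ?K \<in> carrier_mat ?n ?n" using Kc by auto
      then show "foldr (\<lambda>K acc. mat_adjoint K * K + acc) [?K] (0\<^sub>m ?n ?n) = 1\<^sub>m ?n"
        using K_unitary[of d] by simp
    qed
    have ggi: "gg d r \<noteq> gg d c" if "r < ?n" "c < ?n" "r \<noteq> c" for r c
      using that ff_gg by metis
    have ioK: "is_diag ?n (?K * \<sigma> * mat_adjoint ?K)" if "incoherent_state ?n \<sigma>" for \<sigma>
    proof -
      have sc: "\<sigma> \<in> carrier_mat ?n ?n" and sd: "is_diag ?n \<sigma>"
        using that unfolding incoherent_state_def density_def by auto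
      show ?thesis unfolding is_diag_def
      proof (intro allI impI)
        fix r c assume rc: "r < ?n" "c < ?n" "r \<noteq> c"
        show "(?K * \<sigma> * mat_adjoint ?K) $$ (r,c) = 0"
          using K_conj[OF sc rc(1,2)] sd gg_lt[OF rc(1)] gg_lt[OF rc(2)] ggi[OF rc] unfolding is_diag_def by simp
      qed
    qed
    have io: "incoherent_operation ?n [?K]" unfolding incoherent_operation_def using kc ioK by simp
    have out: "apply_kraus ?n [?K] ?\<tau> = embedM ?n d ?h1 \<rho>s"
    proof -
      have tc: "?\<tau> \<in> carrier_mat ?n ?n" using tdens unfolding density_def by simp
      have kk: "?K * ?\<tau> * mat_adjoint ?K \<in> carrier_mat ?n ?n" using Kc tc by auto
      have "apply_kraus ?n [?K] ?\<tau> = ?K * ?\<tau> * mat_adjoint ?K"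
        unfolding apply_kraus_def using kk by simp
      also have "\<dots> = embedM ?n d ?h1 \<rho>s"
      proof (rule eq_matI)
        fix r c assume "r < dim_row (embedM ?n d ?h1 \<rho>s)" "c < dim_col (embedM ?n d ?h1 \<rho>s)"
        then have rc: "r < ?n" "c < ?n" unfolding embedM_def by auto
        have "(?K * ?\<tau> * mat_adjoint ?K) $$ (r,c) = ?\<tau> $$ (gg d r, gg d c)"
          by (rule K_conj[OF tc rc])
        also have "\<dots> = Sm d ?h0 \<rho>s (gg d r) (gg d c)"
          unfolding teq embedM_def using gg_lt[OF rc(1)] gg_lt[OF rc(2)] by simp
        also have "\<dots> = Sm d ?h1 \<rho>s r c"
          unfolding Sm_def
        proof (intro sum.cong refl)
          fix a b assume ab: "a \<in> {..<d}" "b \<in> {..<d}"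
          have "enc d a 0 0 = gg d r \<longleftrightarrow> enc d a a a = r"
            using gg_iff[OF rc(1) h0n, of a] ff_enc0[of a d] ab by auto
          moreover have "enc d b 0 0 = gg d c \<longleftrightarrow> enc d b b b = c"
            using gg_iff[OF rc(2) h0n, of b] ff_enc0[of b d] ab by auto
          ultimately show "(if enc d a 0 0 = gg d r \<and> enc d b 0 0 = gg d c then \<rho>s $$ (a, b) else 0) =
              (if enc d a a a = r \<and> enc d b b b = c then \<rho>s $$ (a, b) else 0)" by simp
        qed
        finally show "(?K * ?\<tau> * mat_adjoint ?K) $$ (r,c) = embedM ?n d ?h1 \<rho>s $$ (r,c)"
          unfolding embedM_def using rc by simp
      qed (use Kc in \<open>auto simp: embedM_def\<close>)
      finally show ?thesis .
    qed
    have "genuinely_tripartite_entangled d (apply_kraus ?n [?K] ?\<tau>)"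
      unfolding genuinely_tripartite_entangled_def out
      using embedM_density[OF inj_h1 h1n assms(2)] notbisep[OF ij] by simp
    then show "\<exists>Ks. incoherent_operation ?n Ks \<and> genuinely_tripartite_entangled d (apply_kraus ?n Ks ?\<tau>)"
      using io by blast
  qed
qed


end
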